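(* Let $M=\langle S,A,P,R,s_\iota,\gamma\rangle$ be an MDP, $s^*_1,s^*_2\in S$, and let $\mathcal{M}$ be the bisimulation metric RMDP constructed from $M$ (see context). Then the optimal robust value function $\underline{V}^*_{\mathcal{M}}\colon S\times S\to\mathbb{R}$ of $\mathcal{M}$ is a pseudometric on $S$.
   Context: An MDP $M=\langle S,A,P,R,s_\iota,\gamma\rangle$ has finite states $S$, finite actions $A$, transition function $P\colon S\times A\to\mathcal{D}(S)$, rewards $R\colon S\times A\to\mathbb{R}$, initial state $s_\iota$, discount $\gamma\in(0,1)$. A pseudometric on $X$ is $d\colon X\times X\to[0,\infty)$ with $d(x,x)=0$, $d(x,x')=d(x',x)$ and $d(x,x'')\le d(x,x')+d(x',x'')$. For distributions $\mu,\nu$ on $S$, $\Lambda_{\mu,\nu}$ is the set of couplings: $\vec\lambda\in\mathbb{R}_{\ge0}^{S\times S}$ with $\sum_{t'}\vec\lambda(t,t')=\mu(t)$ and $\sum_t\vec\lambda(t,t')=\nu(t')$. The bisimulation metric RMDP is $\mathcal{M}=\langle S\times S,A,\mathcal{U},\mathcal{R},\langle s^*_1,s^*_2\rangle,\gamma\rangle$, an $(s,a)$-rectangular RMDP with state space $S\times S$, uncertainty set $\mathcal{U}=\prod_{((s,s'),a)}\mathcal{U}_{((s,s'),a)}$ where $\mathcal{U}_{((s,s'),a)}=\Lambda_{P(s,a),P(s',a)}$ (a coupling $\vec\lambda$ is used as the distribution over successor pairs $(t,t')$), and reward $\mathcal{R}(\langle s,s'\rangle,a)=(1-\gamma)|R(s,a)-R(s',a)|$.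 For an RMDP with state space $Q$, actions $A$, rewards $\mathcal R$ and uncertainty set $\mathcal{U}$ inducing transition functions $P_{\vec u}$, the robust value of a policy $\pi$ is $\underline{V}^\pi(q)=\inf_{\vec u\in\mathcal{U}}\mathbb{E}_{\pi,P_{\vec u}}[\sum_{t\ge0}\gamma^t\mathcal{R}(q_t,a_t)\mid q_0=q]$ and the optimal robust value is $\underline{V}^*(q)=\sup_\pi\underline{V}^\pi(q)$ over all (history-dependent, randomized) policies. *)

theory Defs
  imports "HOL-Probability.Probability_Mass_Function"
begin

type_synonym ('q, 'a) policy = "('q \<times> 'a) list \<Rightarrow> 'q \<Rightarrow> 'a pmf"

fun exp_reward ::
  "('q::finite \<Rightarrow> 'a::finite \<Rightarrow> real) \<Rightarrow> ('q \<Rightarrow> 'a \<Rightarrow> 'q pmf) \<Rightarrow> ('q, 'a) policy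
   \<Rightarrow> nat \<Rightarrow> ('q \<times> 'a) list \<Rightarrow> 'q \<Rightarrow> real" where
  "exp_reward Rw Pt pol 0 h q = (\<Sum>a\<in>UNIV. pmf (pol h q) a * Rw q a)"
| "exp_reward Rw Pt pol (Suc n) h q =
     (\<Sum>a\<in>UNIV. pmf (pol h q) a *
        (\<Sum>q'\<in>UNIV. pmf (Pt q a) q' * exp_reward Rw Pt pol n (h @ [(q, a)]) q'))"

definition policy_value ::
  "real \<Rightarrow> ('q::finite \<Rightarrow> 'a::finite \<Rightarrow> real) \<Rightarrow> ('q \<Rightarrow> 'a \<Rightarrow> 'q pmf) \<Rightarrow> ('q, 'a) policy \<Rightarrow> 'q \<Rightarrow> real" where
  "policy_value \<gamma> Rw Pt pol q = (\<Sum>n. \<gamma> ^ n * exp_reward Rw Pt pol n [] q)"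

definition rect_models :: "('q \<Rightarrow> 'a \<Rightarrow> 'q pmf set) \<Rightarrow> ('q \<Rightarrow> 'a \<Rightarrow> 'q pmf) set" where
  "rect_models U = {Pt. \<forall>q a. Pt q a \<in> U q a}"

definition robust_value ::
  "real \<Rightarrow> ('q::finite \<Rightarrow> 'a::finite \<Rightarrow> real) \<Rightarrow> ('q \<Rightarrow> 'a \<Rightarrow> 'q pmf set) \<Rightarrow> ('q, 'a) policy \<Rightarrow> 'q \<Rightarrow> real" where
  "robust_value \<gamma> Rw U pol q = (INF Pt\<in>rect_models U. policy_value \<gamma> Rw Pt pol q)"

definition opt_robust_value ::
  "real \<Rightarrow> ('q::finite \<Rightarrow> 'a::finite \<Rightarrow> real) \<Rightarrow> ('q \<Rightarrow> 'a \<Rightarrow> 'q pmf set) \<Rightarrow> 'q \<Rightarrow> real" where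
  "opt_robust_value \<gamma> Rw U q = (SUP pol\<in>(UNIV :: ('q, 'a) policy set). robust_value \<gamma> Rw U pol q)"

definition couplings :: "'s pmf \<Rightarrow> 's pmf \<Rightarrow> ('s \<times> 's) pmf set" where
  "couplings \<mu> \<nu> = {c. map_pmf fst c = \<mu> \<and> map_pmf snd c = \<nu>}"

definition bisim_reward :: "real \<Rightarrow> ('s \<Rightarrow> 'a \<Rightarrow> real) \<Rightarrow> ('s \<times> 's) \<Rightarrow> 'a \<Rightarrow> real" where
  "bisim_reward \<gamma> R = (\<lambda>(s, s') a. (1 - \<gamma>) * \<bar>R s a - R s' a\<bar>)"

definition bisim_unc :: "('s \<Rightarrow> 'a \<Rightarrow> 's pmf) \<Rightarrow> ('s \<times> 's) \<Rightarrow> 'a \<Rightarrow> ('s \<times> 's) pmf set" where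
  "bisim_unc P = (\<lambda>(s, s') a. couplings (P s a) (P s' a))"

definition pseudometric :: "('x \<Rightarrow> 'x \<Rightarrow> real) \<Rightarrow> bool" where
  "pseudometric d \<longleftrightarrow> (\<forall>x y. d x y \<ge> 0) \<and> (\<forall>x. d x x = 0) \<and> (\<forall>x y. d x y = d y x)
     \<and> (\<forall>x y z. d x z \<le> d x y + d y z)"

end

theory Submission
  imports Defs
begin

definition E :: "'q pmf \<Rightarrow> ('q \<Rightarrow> real) \<Rightarrow> real" where
  "E c f = measure_pmf.expectation c f"

lemma E_sum: "E (c :: 'q::finite pmf) f = (\<Sum>q\<in>UNIV. pmf c q * f q)"
  unfolding E_def by (subst integral_measure_pmf_real[where A=UNIV]) (auto simp: mult.commute)

lemma integrable_fin[simp]: "integrable (measure_pmf (c :: 'q::finite pmf)) (f :: 'q \<Rightarrow> real)"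
  by (rule integrable_measure_pmf_finite) simp

lemma E_map: "E (map_pmf g c) f = E c (\<lambda>x. f (g x))"
  unfolding E_def by simp

lemma E_add: "E (c :: 'q::finite pmf) (\<lambda>x. f x + g x) = E c f + E c g"
  unfolding E_def by (simp add: Bochner_Integration.integral_add)

lemma E_const: "E c (\<lambda>x. k) = k"
  unfolding E_def by simp

lemma E_mono: "(\<And>x. x \<in> set_pmf c \<Longrightarrow> f x \<le> g x) \<Longrightarrow> E (c :: 'q::finite pmf) f \<le> E c g"
  unfolding E_def by (rule integral_mono_AE) (auto simp: AE_measure_pmf_iff)

lemma E_lb: "(\<And>x. m \<le> f x) \<Longrightarrow> m \<le> E (c :: 'q::finite pmf) f"
  using E_mono[of c "\<lambda>_. m" f] by (simp add: E_const)

lemma E_ub: "(\<And>x. f x \<le> m) \<Longrightarrow> E (c :: 'q::finite pmf) f \<le> m"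
  using E_mono[of c f "\<lambda>_. m"] by (simp add: E_const)

lemma E_return: "E (return_pmf x) f = f x"
  unfolding E_def by simp

lemma E_cmult: "E (c :: 'q::finite pmf) (\<lambda>x. k * f x) = k * E c f"
  unfolding E_def by simp

lemma E_diff: "E (c :: 'q::finite pmf) (\<lambda>x. f x - g x) = E c f - E c g"
  unfolding E_def by (simp add: Bochner_Integration.integral_diff)

lemma glue:
  assumes "map_pmf snd c1 = map_pmf fst c2"
  obtains w where "map_pmf fst w = c1" "map_pmf snd w = c2"
    "\<And>p1 p2. (p1, p2) \<in> set_pmf w \<Longrightarrow> snd p1 = fst p2"
proof -
  have r1: "rel_pmf (\<lambda>p y. snd p = y) c1 (map_pmf snd c1)"
    by (subst pmf.rel_map) (rule rel_pmf_reflI, simp)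
  have r2: "rel_pmf (\<lambda>y p. y = fst p) (map_pmf fst c2) c2"
    by (subst pmf.rel_map) (rule rel_pmf_reflI, simp)
  have "rel_pmf ((\<lambda>p y. snd p = y) OO (\<lambda>y p. y = fst p)) c1 c2"
    unfolding pmf.rel_compp using r1 r2 assms by auto
  then show ?thesis
  proof (cases rule: rel_pmf.cases)
    case (1 pq)
    show ?thesis
      by (rule that[of pq]) (use 1 in \<open>auto simp: OO_def\<close>)
  qed
qed

definition W :: "('q \<Rightarrow> 'a \<Rightarrow> 'q pmf set) \<Rightarrow> ('q \<Rightarrow> real) \<Rightarrow> 'q \<Rightarrow> 'a \<Rightarrow> real" where
  "W U f q a = (INF c\<in>U q a. E c f)"

definition T :: "real \<Rightarrow> ('q \<Rightarrow> 'a::finite \<Rightarrow> real) \<Rightarrow> ('q \<Rightarrow> 'a \<Rightarrow> 'q pmf set) \<Rightarrow> ('q \<Rightarrow> real) \<Rightarrow> 'q \<Rightarrow> real" where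
  "T \<gamma> Rw U f q = Max (range (\<lambda>a. Rw q a + \<gamma> * W U f q a))"

lemma bdd_E: "bdd_below ((\<lambda>c. E c (f :: 'q::finite \<Rightarrow> real)) ` S)"
proof
  fix y assume "y \<in> (\<lambda>c. E c f) ` S"
  then obtain c where "y = E c f" by auto
  moreover have "Min (range f) \<le> f x" for x by (rule Min_le) auto
  ultimately show "Min (range f) \<le> y" using E_lb by metis
qed

lemma W_le: "c \<in> U q a \<Longrightarrow> W U (f :: 'q::finite \<Rightarrow> real) q a \<le> E c f"
  unfolding W_def by (rule cINF_lower[OF bdd_E])

lemma W_ge: "U q a \<noteq> {} \<Longrightarrow> (\<And>c. c \<in> U q a \<Longrightarrow> m \<le> E c f) \<Longrightarrow> m \<le> W U f q a"
  unfolding W_def by (rule cINF_greatest) auto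

lemma T_ge: "Rw q a + \<gamma> * W U f q a \<le> T \<gamma> Rw U f q"
  unfolding T_def by (rule Max_ge) auto

lemma T_attain: "\<exists>a. T \<gamma> Rw U f q = Rw q a + \<gamma> * W U f q a"
proof -
  have "T \<gamma> Rw U f q \<in> range (\<lambda>a. Rw q a + \<gamma> * W U f q a)"
    unfolding T_def by (rule Max_in) auto
  then show ?thesis by auto
qed

lemma W_contr1:
  assumes ne: "U q a \<noteq> {}" and b: "\<And>x. f x \<le> g x + k"
  shows "W U (f :: 'q::finite \<Rightarrow> real) q a \<le> W U g q a + k"
proof -
  have "W U f q a - k \<le> W U g q a"
  proof (rule W_ge[where U=U and q=q and a=a, OF ne])
    fix c assume c: "c \<in> U q a"
    have "W U f q a \<le> E c f" by (rule W_le[where U=U and q=q and a=a, OF c])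
    also have "\<dots> \<le> E c (\<lambda>x. g x + k)" by (rule E_mono) (use b in auto)
    also have "\<dots> = E c g + k" by (simp add: E_add E_const)
    finally show "W U f q a - k \<le> E c g" by simp
  qed
  then show ?thesis by simp
qed

lemma W_contr:
  assumes ne: "U q a \<noteq> {}" and b: "\<And>x. \<bar>f x - g x\<bar> \<le> k"
  shows "\<bar>W U (f :: 'q::finite \<Rightarrow> real) q a - W U g q a\<bar> \<le> k"
proof -
  have "W U f q a \<le> W U g q a + k" by (rule W_contr1[where U=U and q=q and a=a, OF ne]) (smt (verit) b)
  moreover have "W U g q a \<le> W U f q a + k" by (rule W_contr1[where U=U and q=q and a=a, OF ne]) (smt (verit) b)
  ultimately show ?thesis by auto
qed

lemma T_contr:
  assumes ne: "\<And>q a. U q a \<noteq> {}" and b: "\<And>x. \<bar>f x - g x\<bar> \<le> k" and g: "0 \<le> \<gamma>"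
  shows "\<bar>T \<gamma> Rw U (f :: 'q::finite \<Rightarrow> real) q - T \<gamma> Rw U g q\<bar> \<le> \<gamma> * k"
proof -
  have w: "\<bar>W U f q a - W U g q a\<bar> \<le> k" for a by (rule W_contr[where U=U and q=q and a=a, OF ne b])
  have w': "\<gamma> * W U f q a \<le> \<gamma> * W U g q a + \<gamma> * k" "\<gamma> * W U g q a \<le> \<gamma> * W U f q a + \<gamma> * k" for a
  proof -
    have "W U f q a - W U g q a \<le> k" "W U g q a - W U f q a \<le> k" using w[of a] by auto
    then have "\<gamma> * (W U f q a - W U g q a) \<le> \<gamma> * k" "\<gamma> * (W U g q a - W U f q a) \<le> \<gamma> * k"
      using mult_left_mono g by blast+
    then show "\<gamma> * W U f q a \<le> \<gamma> * W U g q a + \<gamma> * k" "\<gamma> * W U g q a \<le> \<gamma> * W U f q a + \<gamma> * k" by (auto simp: algebra_simps)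
  qed
  obtain a1 where a1: "T \<gamma> Rw U f q = Rw q a1 + \<gamma> * W U f q a1" using T_attain[where \<gamma>=\<gamma> and Rw=Rw and U=U and f=f and q=q] by blast
  obtain a2 where a2: "T \<gamma> Rw U g q = Rw q a2 + \<gamma> * W U g q a2" using T_attain[where \<gamma>=\<gamma> and Rw=Rw and U=U and f=g and q=q] by blast
  have "T \<gamma> Rw U f q \<le> T \<gamma> Rw U g q + \<gamma> * k"
    using a1 w'(1)[of a1] T_ge[of Rw q a1 \<gamma> U g] by linarith
  moreover have "T \<gamma> Rw U g q \<le> T \<gamma> Rw U f q + \<gamma> * k"
    using a2 w'(2)[of a2] T_ge[of Rw q a2 \<gamma> U f] by linarith
  ultimately show ?thesis by auto
qed

lemma fixpoint:
  fixes Rw :: "'q::finite \<Rightarrow> 'a::finite \<Rightarrow> real"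
  assumes ne: "\<And>q a. U q a \<noteq> {}" and g0: "0 \<le> \<gamma>" and g1: "\<gamma> < 1"
  defines "x \<equiv> \<lambda>n. ((T \<gamma> Rw U) ^^ n) (\<lambda>_::'q::finite. 0)"
  shows "\<exists>L. T \<gamma> Rw U L = L \<and> (\<forall>q. (\<lambda>n. x n q) \<longlonglongrightarrow> L q)"
proof -
  define B0 where "B0 = (\<Sum>q\<in>UNIV. \<bar>x (Suc 0) q - x 0 q\<bar>)"
  have xs: "x (Suc n) = T \<gamma> Rw U (x n)" for n by (simp add: x_def)
  have inc: "\<bar>x (Suc n) q - x n q\<bar> \<le> \<gamma> ^ n * B0" for n q
  proof (induction n arbitrary: q)
    case 0
    show ?case unfolding B0_def
      using member_le_sum[where f="\<lambda>q. \<bar>x (Suc 0) q - x 0 q\<bar>" and i=q and A=UNIV] by simp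
  next
    case (Suc n)
    have "\<bar>x (Suc (Suc n)) q - x (Suc n) q\<bar> \<le> \<gamma> * (\<gamma> ^ n * B0)"
      unfolding xs[of "Suc n"] xs[of n] by (rule T_contr[OF ne _ g0]) (use Suc in \<open>simp add: xs\<close>)
    then show ?case by simp
  qed
  define L where "L q = (\<Sum>k. x (Suc k) q - x k q)" for q
  have conv: "(\<lambda>n. x n q) \<longlonglongrightarrow> L q" for q
  proof -
    have "summable (\<lambda>k. x (Suc k) q - x k q)"
    proof (rule summable_comparison_test')
      show "summable (\<lambda>k. \<gamma> ^ k * B0)"
        by (rule summable_mult2) (rule summable_geometric, use g0 g1 in auto)
      show "norm (x (Suc k) q - x k q) \<le> \<gamma> ^ k * B0" for k using inc by simp
    qed
    then have "(\<lambda>n. \<Sum>k<n. x (Suc k) q - x k q) \<longlonglongrightarrow> L q"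
      unfolding L_def by (simp add: summable_LIMSEQ)
    moreover have "(\<Sum>k<n. x (Suc k) q - x k q) = x n q" for n
      by (subst sum_lessThan_telescope) (simp add: x_def)
    ultimately show ?thesis by simp
  qed
  have fixL: "T \<gamma> Rw U L q = L q" for q
  proof -
    define e where "e n = (\<Sum>q'\<in>UNIV. \<bar>L q' - x n q'\<bar>)" for n
    have e0: "e \<longlonglongrightarrow> 0"
    proof -
      have "e \<longlonglongrightarrow> (\<Sum>q'\<in>UNIV. \<bar>L q' - L q'\<bar>)"
        unfolding e_def by (intro tendsto_intros conv)
      then show ?thesis by simp
    qed
    have bnd: "\<bar>T \<gamma> Rw U L q - x (Suc n) q\<bar> \<le> \<gamma> * e n" for n
      unfolding xs by (rule T_contr[OF ne _ g0]) (auto simp: e_def intro: member_le_sum)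
    have "(\<lambda>n. T \<gamma> Rw U L q - x (Suc n) q) \<longlonglongrightarrow> 0"
    proof (rule Lim_null_comparison)
      show "\<forall>\<^sub>F n in sequentially. norm (T \<gamma> Rw U L q - x (Suc n) q) \<le> \<gamma> * e n"
        using bnd by simp
      show "(\<lambda>n. \<gamma> * e n) \<longlonglongrightarrow> 0" using tendsto_mult_right_zero[OF e0] by simp
    qed
    then have "(\<lambda>n. T \<gamma> Rw U L q - (T \<gamma> Rw U L q - x (Suc n) q)) \<longlonglongrightarrow> T \<gamma> Rw U L q - 0"
      by (intro tendsto_intros)
    then have "(\<lambda>n. x (Suc n) q) \<longlonglongrightarrow> T \<gamma> Rw U L q" by simp
    moreover have "(\<lambda>n. x (Suc n) q) \<longlonglongrightarrow> L q" using conv by (rule LIMSEQ_Suc)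
    ultimately show ?thesis by (rule LIMSEQ_unique)
  qed
  show ?thesis using fixL conv by (intro exI[of _ L]) auto
qed

lemma E_sumf: "E (c :: 'q::finite pmf) (\<lambda>x. \<Sum>i\<in>I. f i x) = (\<Sum>i\<in>I. E c (f i))"
  unfolding E_def by (rule Bochner_Integration.integral_sum) simp

lemma er0: "exp_reward Rw Pt pol 0 h q = E (pol h q) (Rw q)"
  by (simp add: E_sum)

lemma erS: "exp_reward Rw Pt pol (Suc n) h q =
   E (pol h q) (\<lambda>a. E (Pt q a) (\<lambda>q'. exp_reward Rw Pt pol n (h @ [(q, a)]) q'))"
  by (simp add: E_sum)

lemma er_bounds:
  assumes "\<And>q a. 0 \<le> Rw q a" "\<And>q a. Rw q a \<le> B"
  shows "0 \<le> exp_reward Rw Pt pol n h q \<and> exp_reward Rw Pt pol n h q \<le> B"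
proof (induction n arbitrary: h q)
  case 0
  show ?case unfolding er0 using assms by (auto intro: E_lb E_ub)
next
  case (Suc n)
  show ?case unfolding erS using Suc by (auto intro!: E_lb E_ub)
qed

lemma PS_Suc:
  "(\<Sum>n<Suc N. \<gamma> ^ n * exp_reward Rw Pt pol n h q) =
   E (pol h q) (\<lambda>a. Rw q a + \<gamma> * E (Pt q a) (\<lambda>q'. \<Sum>n<N. \<gamma> ^ n * exp_reward Rw Pt pol n (h @ [(q, a)]) q'))"
proof -
  have "(\<Sum>n<Suc N. \<gamma> ^ n * exp_reward Rw Pt pol n h q) =
        exp_reward Rw Pt pol 0 h q + (\<Sum>n<N. \<gamma> ^ Suc n * exp_reward Rw Pt pol (Suc n) h q)"
    by (subst sum.lessThan_Suc_shift) simp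
  also have "(\<Sum>n<N. \<gamma> ^ Suc n * exp_reward Rw Pt pol (Suc n) h q) =
     E (pol h q) (\<lambda>a. \<gamma> * E (Pt q a) (\<lambda>q'. \<Sum>n<N. \<gamma> ^ n * exp_reward Rw Pt pol n (h @ [(q, a)]) q'))"
    by (simp del: exp_reward.simps add: erS E_sumf E_cmult sum_distrib_left mult.assoc)
  finally show ?thesis by (simp del: exp_reward.simps sum.lessThan_Suc add: er0 E_add)
qed

declare exp_reward.simps[simp del]

lemma summable_pv:
  assumes "\<And>q a. 0 \<le> Rw q a" "0 \<le> \<gamma>" "\<gamma> < 1"
  shows "summable (\<lambda>n. \<gamma> ^ n * exp_reward Rw Pt pol n h q)"
proof (rule summable_comparison_test')
  define B where "B = Max (range (case_prod Rw))"
  have rb: "Rw q a \<le> B" for q a unfolding B_def by (rule Max_ge) auto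
  show "summable (\<lambda>n. \<gamma> ^ n * B)"
    by (rule summable_mult2) (rule summable_geometric, use assms in auto)
  show "norm (\<gamma> ^ n * exp_reward Rw Pt pol n h q) \<le> \<gamma> ^ n * B" for n
    using er_bounds[OF assms(1) rb, where Pt=Pt and pol=pol and n=n and h=h and q=q] assms(2)
    by (simp add: abs_mult mult_left_mono)
qed

lemma pv_nonneg:
  assumes "\<And>q a. 0 \<le> Rw q a" "0 \<le> \<gamma>" "\<gamma> < 1"
  shows "0 \<le> policy_value \<gamma> Rw Pt pol q"
  unfolding policy_value_def
proof (rule suminf_nonneg[OF summable_pv[OF assms]])
  define B where "B = Max (range (case_prod Rw))"
  have rb: "Rw q a \<le> B" for q a unfolding B_def by (rule Max_ge) auto
  show "0 \<le> \<gamma> ^ n * exp_reward Rw Pt pol n [] q" for n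
    using er_bounds[OF assms(1) rb, where Pt=Pt and pol=pol and n=n and h="[]" and q=q] assms(2) by simp
qed

lemma rect_ne:
  assumes "\<And>q a. U q a \<noteq> {}"
  shows "rect_models U \<noteq> {}"
proof -
  define Pt where "Pt q a = (SOME c. c \<in> U q a)" for q a
  have "Pt q a \<in> U q a" for q a unfolding Pt_def using assms some_in_eq by metis
  then show ?thesis unfolding rect_models_def by auto
qed

context
  fixes \<gamma> :: real and Rw :: "'q::finite \<Rightarrow> 'a::finite \<Rightarrow> real" and U :: "'q \<Rightarrow> 'a \<Rightarrow> 'q pmf set"
    and L :: "'q \<Rightarrow> real"
  assumes g0: "0 < \<gamma>" and g1: "\<gamma> < 1" and Rnn: "\<And>q a. 0 \<le> Rw q a"
    and ne: "\<And>q a. U q a \<noteq> {}" and fixL: "T \<gamma> Rw U L = L" and Lnn: "\<And>q. 0 \<le> L q"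
begin

lemma upper_eps:
  assumes eps: "0 < \<epsilon>"
  shows "robust_value \<gamma> Rw U pol q \<le> L q + \<epsilon>"
proof -
  define \<epsilon>' where "\<epsilon>' = \<epsilon> * (1 - \<gamma>) / \<gamma>"
  have e'pos: "0 < \<epsilon>'" unfolding \<epsilon>'_def using eps g0 g1 by simp
  have C: "\<gamma> * \<epsilon>' + \<gamma> * \<epsilon> = \<epsilon>" unfolding \<epsilon>'_def using g0 by (simp add: field_simps)
  have ex: "\<exists>c. c \<in> U q a \<and> E c L < W U L q a + \<epsilon>'" for q a
  proof -
    have "W U L q a < W U L q a + \<epsilon>'" using e'pos by simp
    then show ?thesis unfolding W_def[of U L q a] using cINF_less_iff[OF ne bdd_E] by blast
  qed
  define Pt where "Pt q a = (SOME c. c \<in> U q a \<and> E c L < W U L q a + \<epsilon>')" for q a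
  have Pt: "Pt q a \<in> U q a" "E (Pt q a) L < W U L q a + \<epsilon>'" for q a
    unfolding Pt_def using someI_ex[OF ex[of q a]] by auto
  have PS: "(\<Sum>n<N. \<gamma> ^ n * exp_reward Rw Pt pol n h q) \<le> L q + \<epsilon>" for N h q
  proof (induction N arbitrary: h q)
    case 0
    show ?case using Lnn[of q] eps by simp
  next
    case (Suc N)
    show ?case unfolding PS_Suc
    proof (rule E_ub)
      fix a
      have "E (Pt q a) (\<lambda>q'. \<Sum>n<N. \<gamma> ^ n * exp_reward Rw Pt pol n (h @ [(q, a)]) q')
            \<le> E (Pt q a) (\<lambda>q'. L q' + \<epsilon>)"
        by (rule E_mono) (rule Suc)
      also have "\<dots> = E (Pt q a) L + \<epsilon>" by (simp add: E_add E_const)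
      also have "\<dots> \<le> W U L q a + \<epsilon>' + \<epsilon>" using Pt(2)[of q a] by simp
      finally have "\<gamma> * E (Pt q a) (\<lambda>q'. \<Sum>n<N. \<gamma> ^ n * exp_reward Rw Pt pol n (h @ [(q, a)]) q')
            \<le> \<gamma> * (W U L q a + \<epsilon>' + \<epsilon>)" using g0 by (simp add: mult_left_mono)
      moreover have "Rw q a + \<gamma> * W U L q a \<le> L q"
        using T_ge[of Rw q a \<gamma> U L] fixL by simp
      ultimately show "Rw q a + \<gamma> * E (Pt q a) (\<lambda>q'. \<Sum>n<N. \<gamma> ^ n * exp_reward Rw Pt pol n (h @ [(q, a)]) q')
            \<le> L q + \<epsilon>" using C by (simp add: algebra_simps)
    qed
  qed
  have "policy_value \<gamma> Rw Pt pol q \<le> L q + \<epsilon>"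
    unfolding policy_value_def
    by (rule suminf_le_const[OF summable_pv[OF Rnn _ g1]]) (use g0 PS in auto)
  moreover have "robust_value \<gamma> Rw U pol q \<le> policy_value \<gamma> Rw Pt pol q"
    unfolding robust_value_def
  proof (rule cINF_lower)
    show "Pt \<in> rect_models U" using Pt(1) unfolding rect_models_def by auto
    show "bdd_below ((\<lambda>Pt. policy_value \<gamma> Rw Pt pol q) ` rect_models U)"
      by (rule bdd_belowI[of _ 0]) (use pv_nonneg[OF Rnn _ g1] g0 in auto)
  qed
  ultimately show ?thesis by simp
qed

lemma upper: "robust_value \<gamma> Rw U pol q \<le> L q"
  by (rule field_le_epsilon) (rule upper_eps)

lemma lower: "\<exists>pol. L q \<le> robust_value \<gamma> Rw U pol q"
proof -
  define as where "as q = (SOME a. T \<gamma> Rw U L q = Rw q a + \<gamma> * W U L q a)" for q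
  have as: "L q = Rw q (as q) + \<gamma> * W U L q (as q)" for q
    unfolding as_def using someI_ex[OF T_attain[of \<gamma> Rw U L q]] fixL by simp
  define pol :: "('q, 'a) policy" where "pol h q = return_pmf (as q)" for h q
  define M where "M = Max (range L)"
  have LM: "L q \<le> M" for q unfolding M_def by (rule Max_ge) auto
  have "L q \<le> policy_value \<gamma> Rw Pt pol q" if Pt: "Pt \<in> rect_models U" for Pt
  proof -
    have PtU: "Pt q a \<in> U q a" for q a using Pt unfolding rect_models_def by auto
    have PS: "L q - \<gamma> ^ N * M \<le> (\<Sum>n<N. \<gamma> ^ n * exp_reward Rw Pt pol n h q)" for N h q
    proof (induction N arbitrary: h q)
      case 0
      show ?case using LM[of q] by simp
    next
      case (Suc N)
      have "E (Pt q (as q)) (\<lambda>q'. L q' - \<gamma> ^ N * M) \<le>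
            E (Pt q (as q)) (\<lambda>q'. \<Sum>n<N. \<gamma> ^ n * exp_reward Rw Pt pol n (h @ [(q, as q)]) q')"
        by (rule E_mono) (rule Suc)
      moreover have "E (Pt q (as q)) (\<lambda>q'. L q' - \<gamma> ^ N * M) = E (Pt q (as q)) L - \<gamma> ^ N * M"
        by (simp add: E_diff E_const)
      moreover have "W U L q (as q) \<le> E (Pt q (as q)) L" by (rule W_le[where U=U and q=q and a="as q", OF PtU])
      ultimately have "W U L q (as q) - \<gamma> ^ N * M \<le>
            E (Pt q (as q)) (\<lambda>q'. \<Sum>n<N. \<gamma> ^ n * exp_reward Rw Pt pol n (h @ [(q, as q)]) q')" by simp
      then have "\<gamma> * (W U L q (as q) - \<gamma> ^ N * M) \<le>
            \<gamma> * E (Pt q (as q)) (\<lambda>q'. \<Sum>n<N. \<gamma> ^ n * exp_reward Rw Pt pol n (h @ [(q, as q)]) q')"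
        using g0 by (simp add: mult_left_mono)
      then show ?case unfolding PS_Suc pol_def E_return using as[of q]
        by (simp add: algebra_simps)
    qed
    have sm: "summable (\<lambda>n. \<gamma> ^ n * exp_reward Rw Pt pol n [] q)"
      by (rule summable_pv[OF Rnn _ g1]) (use g0 in auto)
    define B where "B = Max (range (case_prod Rw))"
    have rb: "Rw q a \<le> B" for q a unfolding B_def by (rule Max_ge) auto
    have "L q - \<gamma> ^ N * M \<le> policy_value \<gamma> Rw Pt pol q" for N
    proof -
      have "(\<Sum>n<N. \<gamma> ^ n * exp_reward Rw Pt pol n [] q) \<le> policy_value \<gamma> Rw Pt pol q"
        unfolding policy_value_def
        by (rule sum_le_suminf[OF sm]) (use er_bounds[where Rw=Rw and B=B, OF Rnn rb] g0 in auto)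
      then show ?thesis using PS[where N=N and h="[]" and q=q] by simp
    qed
    moreover have "(\<lambda>N. L q - \<gamma> ^ N * M) \<longlonglongrightarrow> L q - 0 * M"
      by (intro tendsto_intros) (use g0 g1 in auto)
    ultimately show ?thesis
      by (intro LIMSEQ_le_const2[of "\<lambda>N. L q - \<gamma> ^ N * M"]) auto
  qed
  then have "L q \<le> robust_value \<gamma> Rw U pol q"
    unfolding robust_value_def by (intro cINF_greatest rect_ne ne) auto
  then show ?thesis by blast
qed

lemma opt_eq: "opt_robust_value \<gamma> Rw U q = L q"
proof -
  obtain pol where pol: "L q \<le> robust_value \<gamma> Rw U pol q" using lower by blast
  have "opt_robust_value \<gamma> Rw U q \<le> L q"
    unfolding opt_robust_value_def by (rule cSUP_least) (auto intro: upper)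
  moreover have "L q \<le> opt_robust_value \<gamma> Rw U q"
    unfolding opt_robust_value_def
    by (rule cSUP_upper2[where x=pol]) (auto intro!: bdd_aboveI[of _ "L q"] upper simp: pol)
  ultimately show ?thesis by simp
qed

end

definition pm :: "('s \<times> 's \<Rightarrow> real) \<Rightarrow> bool" where
  "pm d \<longleftrightarrow> (\<forall>x y. 0 \<le> d (x, y)) \<and> (\<forall>x. d (x, x) = 0) \<and> (\<forall>x y. d (x, y) = d (y, x))
     \<and> (\<forall>x y z. d (x, z) \<le> d (x, y) + d (y, z))"

lemma unc_ne: "bisim_unc P q a \<noteq> {}"
  unfolding bisim_unc_def couplings_def
  by (cases q) (auto intro!: exI[of _ "pair_pmf (P (fst q) a) (P (snd q) a)"] simp: map_fst_pair_pmf map_snd_pair_pmf)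

lemma W_ge_b: "(\<And>c. c \<in> bisim_unc P q a \<Longrightarrow> m \<le> E c f) \<Longrightarrow> m \<le> W (bisim_unc P) f q a"
  by (rule W_ge[where U="bisim_unc P" and q=q and a=a, OF unc_ne])

lemma rw_nonneg: "\<gamma> < 1 \<Longrightarrow> 0 \<le> bisim_reward \<gamma> R q a"
  unfolding bisim_reward_def by (cases q) auto

context
  fixes P :: "'s::finite \<Rightarrow> 'a::finite \<Rightarrow> 's pmf" and R :: "'s \<Rightarrow> 'a \<Rightarrow> real" and \<gamma> :: real
    and d :: "'s \<times> 's \<Rightarrow> real"
  assumes g0: "0 < \<gamma>" and g1: "\<gamma> < 1" and d: "pm d"
begin

lemma W_nonneg: "0 \<le> W (bisim_unc P) d q a"
  by (rule W_ge_b) (rule E_lb, use d in \<open>auto simp: pm_def\<close>)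

lemma W_diag: "W (bisim_unc P) d (s, s) a \<le> 0"
proof -
  let ?c = "map_pmf (\<lambda>x. (x, x)) (P s a)"
  have "?c \<in> bisim_unc P (s, s) a"
    unfolding bisim_unc_def couplings_def by (simp add: pmf.map_comp o_def)
  then have "W (bisim_unc P) d (s, s) a \<le> E ?c d" by (rule W_le)
  also have "\<dots> = 0" using d by (simp add: E_map pm_def E_const)
  finally show ?thesis .
qed

lemma W_sym: "W (bisim_unc P) d (s, s') a \<le> W (bisim_unc P) d (s', s) a"
proof (rule W_ge_b)
  fix c assume c: "c \<in> bisim_unc P (s', s) a"
  then have "map_pmf prod.swap c \<in> bisim_unc P (s, s') a"
    unfolding bisim_unc_def couplings_def by (simp add: pmf.map_comp o_def)
  then have "W (bisim_unc P) d (s, s') a \<le> E (map_pmf prod.swap c) d" by (rule W_le)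
  also have "\<dots> = E c d" unfolding E_map using d
    by (simp add: pm_def case_prod_unfold prod.swap_def)
  finally show "W (bisim_unc P) d (s, s') a \<le> E c d" .
qed

lemma W_glue:
  assumes c1: "c1 \<in> bisim_unc P (x, y) a" and c2: "c2 \<in> bisim_unc P (y, z) a"
  shows "W (bisim_unc P) d (x, z) a \<le> E c1 d + E c2 d"
proof -
  have "map_pmf snd c1 = map_pmf fst c2" using c1 c2 unfolding bisim_unc_def couplings_def by simp
  then obtain w where w: "map_pmf fst w = c1" "map_pmf snd w = c2"
    "\<And>p1 p2. (p1, p2) \<in> set_pmf w \<Longrightarrow> snd p1 = fst p2" using glue by blast
  let ?c = "map_pmf (\<lambda>(p1, p2). (fst p1, snd p2)) w"
  have "?c \<in> bisim_unc P (x, z) a"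
  proof -
    have "map_pmf fst ?c = map_pmf fst c1" unfolding w(1)[symmetric]
      by (simp add: pmf.map_comp o_def case_prod_unfold)
    moreover have "map_pmf snd ?c = map_pmf snd c2" unfolding w(2)[symmetric]
      by (simp add: pmf.map_comp o_def case_prod_unfold)
    ultimately show ?thesis using c1 c2 unfolding bisim_unc_def couplings_def by simp
  qed
  then have "W (bisim_unc P) d (x, z) a \<le> E ?c d" by (rule W_le)
  also have "\<dots> = E w (\<lambda>p. d (fst (fst p), snd (snd p)))"
    by (simp add: E_map case_prod_unfold)
  also have "\<dots> \<le> E w (\<lambda>p. d (fst p) + d (snd p))"
  proof (rule E_mono)
    fix p assume "p \<in> set_pmf w"
    then have "snd (fst p) = fst (snd p)" using w(3)[of "fst p" "snd p"] by simp
    then show "d (fst (fst p), snd (snd p)) \<le> d (fst p) + d (snd p)"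
      using d unfolding pm_def by (metis prod.collapse)
  qed
  also have "\<dots> = E c1 d + E c2 d"
    unfolding w(1)[symmetric] w(2)[symmetric] by (simp add: E_add E_map)
  finally show ?thesis .
qed

lemma W_tri: "W (bisim_unc P) d (x, z) a \<le> W (bisim_unc P) d (x, y) a + W (bisim_unc P) d (y, z) a"
proof -
  have "W (bisim_unc P) d (x, z) a - W (bisim_unc P) d (x, y) a \<le> E c2 d"
    if c2: "c2 \<in> bisim_unc P (y, z) a" for c2
  proof -
    have "W (bisim_unc P) d (x, z) a - E c2 d \<le> W (bisim_unc P) d (x, y) a"
      by (rule W_ge_b) (use W_glue[OF _ c2] in force)
    then show ?thesis by simp
  qed
  then have "W (bisim_unc P) d (x, z) a - W (bisim_unc P) d (x, y) a \<le> W (bisim_unc P) d (y, z) a"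
    by (intro W_ge_b)
  then show ?thesis by simp
qed

lemma T_pm: "pm (T \<gamma> (bisim_reward \<gamma> R) (bisim_unc P) d)"
proof -
  let ?Rw = "bisim_reward \<gamma> R" and ?U = "bisim_unc P"
  have nn: "0 \<le> T \<gamma> ?Rw ?U d q" for q
  proof -
    have "0 \<le> ?Rw q undefined + \<gamma> * W ?U d q undefined"
      using rw_nonneg[OF g1, of R q undefined] W_nonneg[of q undefined] g0 by simp
    also have "\<dots> \<le> T \<gamma> ?Rw ?U d q" by (rule T_ge)
    finally show ?thesis .
  qed
  have diag: "T \<gamma> ?Rw ?U d (s, s) = 0" for s
  proof -
    obtain a where a: "T \<gamma> ?Rw ?U d (s, s) = ?Rw (s, s) a + \<gamma> * W ?U d (s, s) a"
      using T_attain[of \<gamma> ?Rw ?U d "(s, s)"] by blast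
    have "\<gamma> * W ?U d (s, s) a \<le> 0" using W_diag[of s a] g0 by (simp add: mult_nonneg_nonpos)
    then have "T \<gamma> ?Rw ?U d (s, s) \<le> 0" using a by (simp add: bisim_reward_def)
    then show ?thesis using nn[of "(s, s)"] by simp
  qed
  have sym1: "T \<gamma> ?Rw ?U d (s, s') \<le> T \<gamma> ?Rw ?U d (s', s)" for s s'
  proof -
    obtain a where a: "T \<gamma> ?Rw ?U d (s, s') = ?Rw (s, s') a + \<gamma> * W ?U d (s, s') a"
      using T_attain[of \<gamma> ?Rw ?U d "(s, s')"] by blast
    have "\<gamma> * W ?U d (s, s') a \<le> \<gamma> * W ?U d (s', s) a" using W_sym g0 by (simp add: mult_left_mono)
    moreover have "?Rw (s, s') a = ?Rw (s', s) a" by (simp add: bisim_reward_def abs_minus_commute)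
    ultimately have "T \<gamma> ?Rw ?U d (s, s') \<le> ?Rw (s', s) a + \<gamma> * W ?U d (s', s) a" using a by simp
    also have "\<dots> \<le> T \<gamma> ?Rw ?U d (s', s)" by (rule T_ge)
    finally show ?thesis .
  qed
  have tri: "T \<gamma> ?Rw ?U d (x, z) \<le> T \<gamma> ?Rw ?U d (x, y) + T \<gamma> ?Rw ?U d (y, z)" for x y z
  proof -
    obtain a where a: "T \<gamma> ?Rw ?U d (x, z) = ?Rw (x, z) a + \<gamma> * W ?U d (x, z) a"
      using T_attain[of \<gamma> ?Rw ?U d "(x, z)"] by blast
    have "\<gamma> * W ?U d (x, z) a \<le> \<gamma> * W ?U d (x, y) a + \<gamma> * W ?U d (y, z) a"
      using mult_left_mono[OF W_tri[of x z a y]] g0 by (simp add: distrib_left)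
    moreover have "?Rw (x, z) a \<le> ?Rw (x, y) a + ?Rw (y, z) a"
    proof -
      have "\<bar>R x a - R z a\<bar> \<le> \<bar>R x a - R y a\<bar> + \<bar>R y a - R z a\<bar>" by linarith
      then have "(1 - \<gamma>) * \<bar>R x a - R z a\<bar> \<le> (1 - \<gamma>) * (\<bar>R x a - R y a\<bar> + \<bar>R y a - R z a\<bar>)"
        using g1 by (intro mult_left_mono) auto
      then show ?thesis by (simp add: bisim_reward_def distrib_left)
    qed
    moreover have "?Rw (x, y) a + \<gamma> * W ?U d (x, y) a \<le> T \<gamma> ?Rw ?U d (x, y)" by (rule T_ge)
    moreover have "?Rw (y, z) a + \<gamma> * W ?U d (y, z) a \<le> T \<gamma> ?Rw ?U d (y, z)" by (rule T_ge)
    ultimately show ?thesis using a by linarith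
  qed
  show ?thesis unfolding pm_def using nn diag sym1 tri by (auto intro: antisym)
qed

end

lemma pm_limit:
  assumes "\<And>n. pm (x n)" and "\<And>q. (\<lambda>n. x n q) \<longlonglongrightarrow> L q"
  shows "pm L"
proof -
  have "0 \<le> L (a, b)" for a b
    by (rule LIMSEQ_le_const[OF assms(2)]) (use assms(1) in \<open>auto simp: pm_def\<close>)
  moreover have "L (a, a) = 0" for a
  proof -
    have "(\<lambda>n. x n (a, a)) \<longlonglongrightarrow> 0" using assms(1) by (simp add: pm_def)
    then show ?thesis using assms(2) LIMSEQ_unique by blast
  qed
  moreover have "L (a, b) = L (b, a)" for a b
  proof -
    have "(\<lambda>n. x n (a, b)) = (\<lambda>n. x n (b, a))" using assms(1) by (simp add: pm_def)
    then show ?thesis using assms(2)[of "(a, b)"] assms(2)[of "(b, a)"] LIMSEQ_unique by metis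
  qed
  moreover have "L (a, c) \<le> L (a, b) + L (b, c)" for a b c
  proof (rule LIMSEQ_le[OF assms(2)])
    show "(\<lambda>n. x n (a, b) + x n (b, c)) \<longlonglongrightarrow> L (a, b) + L (b, c)"
      by (intro tendsto_intros assms(2))
    show "\<exists>N. \<forall>n\<ge>N. x n (a, c) \<le> x n (a, b) + x n (b, c)" using assms(1) by (auto simp: pm_def)
  qed
  ultimately show ?thesis unfolding pm_def by blast
qed

theorem lemma18:
  fixes P :: "'s::finite \<Rightarrow> 'a::finite \<Rightarrow> 's pmf"
    and R :: "'s \<Rightarrow> 'a \<Rightarrow> real"
    and s_init :: 's
    and \<gamma> :: real
  assumes "0 < \<gamma>" and "\<gamma> < 1"
  shows "pseudometric (\<lambda>s s'. opt_robust_value \<gamma> (bisim_reward \<gamma> R) (bisim_unc P) (s, s'))"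
proof -
  let ?Rw = "bisim_reward \<gamma> R" and ?U = "bisim_unc P"
  define x where "x n = ((T \<gamma> ?Rw ?U) ^^ n) (\<lambda>_::'s \<times> 's. 0)" for n
  have "\<exists>L. T \<gamma> ?Rw ?U L = L \<and> (\<forall>q. (\<lambda>n. x n q) \<longlonglongrightarrow> L q)"
    unfolding x_def by (rule fixpoint) (use assms in \<open>auto simp: unc_ne\<close>)
  then obtain L where L: "T \<gamma> ?Rw ?U L = L" "\<And>q. (\<lambda>n. x n q) \<longlonglongrightarrow> L q"
    by blast
  have "pm (x n)" for n
  proof (induction n)
    case 0
    show ?case by (simp add: x_def pm_def)
  next
    case (Suc n)
    have "x (Suc n) = T \<gamma> ?Rw ?U (x n)" by (simp add: x_def)
    then show ?case using T_pm[OF assms Suc] by simp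
  qed
  then have pL: "pm L" using pm_limit L(2) by blast
  have "opt_robust_value \<gamma> ?Rw ?U q = L q" for q
    by (rule opt_eq[OF assms _ unc_ne L(1)]) (use rw_nonneg[OF assms(2)] pL in \<open>auto simp: pm_def\<close>)
  then show ?thesis using pL unfolding pm_def pseudometric_def by simp
qed

end
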